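(* Consider the $K$-user shared-link broadcast (coded caching) problem with $\Lambda\le K$ shared helper caches of normalized size $\gamma=M/N$, with $N\ge K$ files, under uncoded cache placement, as described in the context. Let $\boldsymbol{\mathcal{L}}=(\mathcal{L}_1,\dots,\mathcal{L}_\Lambda)$ be any user-to-cache association profile (non-negative integers, $\mathcal{L}_1\ge\mathcal{L}_2\ge\dots\ge\mathcal{L}_\Lambda$, $\sum_{\lambda}\mathcal{L}_\lambda=K$). For $i\in\{0,1,\dots,\Lambda\}$ let $$f(i)=\frac{\sum_{r=1}^{\Lambda-i}\mathcal{L}_r\binom{\Lambda-r}{i}}{\binom{\Lambda}{i}},$$ and let $\mathrm{Conv}(f)$ denote the lower convex envelope of the points $\{(i,f(i)) : i\in\{0,1,\dots,\Lambda\}\}$. Then for every $\gamma\in\{\frac{1}{\Lambda},\frac{2}{\Lambda},\dots,1\}$, the optimal worst-case delivery time satisfies $$T^*(\boldsymbol{\mathcal{L}})=\mathrm{Conv}(f)\big|_{i=\Lambda\gamma}.$$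
   Context: Setting: a server has a library of $N$ files $W^1,\dots,W^N$, each of size one unit. There are $K$ users and $\Lambda\le K$ helper caches, each able to store $M\le N$ units; $\gamma=M/N$, and $N\ge K$. Communication has three phases. (a) Cache placement: each cache $\lambda\in[\Lambda]$ stores content $\mathcal{Z}_\lambda$ of size at most $M$ consisting of uncoded pieces (subsets of bits) of the library files (uncoded cache placement); placement is done without knowledge of the later user-to-cache association or of the demands. (b) User-to-cache association: each user is assigned to exactly one cache; this is a partition $\mathcal{U}=\{\mathcal{U}_1,\dots,\mathcal{U}_\Lambda\}$ of $[K]$, where $\mathcal{U}_\lambda$ is the set of users assigned to cache $\lambda$, each of whom has free access to $\mathcal{Z}_\lambda$. Its profile $\boldsymbol{\mathcal{L}}$ is the vector of cardinalities $|\mathcal{U}_\lambda|$ sorted in non-increasing order; $\mathcal{U}_{\boldsymbol{\mathcal{L}}}$ denotes the class of all associations with profile $\boldsymbol{\mathcal{L}}$. (c) Delivery: each user $k$ requests a file $W^{d_k}$, giving a demand vector $\boldsymbol{d}\in[N]^K$; knowing $\boldsymbol{d}$ and $\mathcal{U}$, the server transmits over an error-free shared broadcast link so that every user can decode its requested file from the transmission and the content of its assigned cache. A caching-and-delivery scheme $\chi$ specifies placement and delivery; $T(\mathcal{U},\boldsymbol{d},\chi)$ is the delivery duration, normalized so that one time unit is the time to send one file over the link. The optimal worst-case delivery time of a profile is $T^*(\boldsymbol{\mathcal{L}})=\min_{\chi}\max_{\mathcal{U}\in\mathcal{U}_{\boldsymbol{\mathcal{L}}},\,\boldsymbol{d}\in[N]^K}T(\mathcal{U},\boldsymbol{d},\chi)$,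 the minimum being over schemes with uncoded cache placement. Binomial coefficients $\binom{a}{b}$ with $b>a$ are zero. *)

theory Defs
  imports Complex_Main
begin

text \<open>Conventions: users are 0..<K, caches 0..<Lambda, files 0..<N, bits of a file 0..<F
  (subpacketization F is chosen by the scheme). A library is a map (file,bit) to bool.
  The profile L is indexed 1..Lambda as in the paper.\<close>

definition valid_assoc :: "nat \<Rightarrow> nat \<Rightarrow> (nat \<Rightarrow> nat) \<Rightarrow> (nat \<Rightarrow> nat) \<Rightarrow> bool" where
  "valid_assoc K Lam L a \<longleftrightarrow> (\<forall>k<K. a k < Lam) \<and>
     (\<exists>\<sigma>. bij_betw \<sigma> {1..Lam} {..<Lam} \<and>
          (\<forall>r\<in>{1..Lam}. card {k. k < K \<and> a k = \<sigma> r} = L r))"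

definition valid_demand :: "nat \<Rightarrow> nat \<Rightarrow> (nat \<Rightarrow> nat) \<Rightarrow> bool" where
  "valid_demand N K d \<longleftrightarrow> (\<forall>k<K. d k < N)"

definition mask :: "(nat \<times> nat) set \<Rightarrow> (nat \<times> nat \<Rightarrow> bool) \<Rightarrow> (nat \<times> nat \<Rightarrow> bool)" where
  "mask Z W = (\<lambda>p. if p \<in> Z then W p else False)"

definition achievable ::
  "nat \<Rightarrow> nat \<Rightarrow> nat \<Rightarrow> real \<Rightarrow> (nat \<Rightarrow> nat) \<Rightarrow> real \<Rightarrow> bool" where
  "achievable N K Lam M L T \<longleftrightarrow>
    (\<exists>F::nat. F > 0 \<and>
      (\<exists>Z :: nat \<Rightarrow> (nat \<times> nat) set.
       \<exists>enc :: (nat \<Rightarrow> nat) \<Rightarrow> (nat \<Rightarrow> nat) \<Rightarrow> (nat \<times> nat \<Rightarrow> bool) \<Rightarrow> bool list.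
       \<exists>dec :: (nat \<Rightarrow> nat) \<Rightarrow> (nat \<Rightarrow> nat) \<Rightarrow> nat \<Rightarrow> bool list \<Rightarrow> (nat \<times> nat \<Rightarrow> bool) \<Rightarrow> nat \<Rightarrow> bool.
        (\<forall>l<Lam. Z l \<subseteq> {..<N} \<times> {..<F} \<and> real (card (Z l)) \<le> M * real F) \<and>
        (\<forall>a d. valid_assoc K Lam L a \<and> valid_demand N K d \<longrightarrow>
           (\<exists>B::nat. real B \<le> T * real F \<and>
              (\<forall>W. length (enc a d W) = B) \<and>
              (\<forall>k<K. \<forall>W. \<forall>j<F.
                 dec a d k (enc a d W) (mask (Z (a k)) W) j = W (d k, j))))))"

definition T_opt :: "nat \<Rightarrow> nat \<Rightarrow> nat \<Rightarrow> real \<Rightarrow> (nat \<Rightarrow> nat) \<Rightarrow> real" where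
  "T_opt N K Lam M L = Inf {T. achievable N K Lam M L T}"

definition lower_conv_env :: "nat \<Rightarrow> (nat \<Rightarrow> real) \<Rightarrow> real \<Rightarrow> real" where
  "lower_conv_env n g x = Inf {(\<Sum>i\<le>n. c i * g i) | c.
      (\<forall>i\<le>n. c i \<ge> 0) \<and> (\<Sum>i\<le>n. c i) = 1 \<and> (\<Sum>i\<le>n. c i * real i) = x}"

definition f_profile :: "nat \<Rightarrow> (nat \<Rightarrow> nat) \<Rightarrow> nat \<Rightarrow> real" where
  "f_profile Lam L i =
     (\<Sum>r = 1..Lam - i. real (L r) * real ((Lam - r) choose i)) / real (Lam choose i)"

end

theory Submission
  imports Defs "HOL-Combinatorics.Multiset_Permutations" "HOL-Library.Product_Lexorder"
begin

lemma tangent_aux: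
  fixes g :: "nat \<Rightarrow> real"
  assumes D: "\<And>y. g (Suc y) - g y \<le> g (Suc (Suc y)) - g (Suc y)" and x0: "1 \<le> x0"
  shows "g x \<ge> g x0 + (real x - real x0) * (g x0 - g (x0 - 1))"
proof -
  define d where "d y = g (Suc y) - g y" for y
  have dmono: "d y \<le> d z" if "y \<le> z" for y z
  proof -
    have "d n \<le> d (Suc n)" for n using D[of n] by (simp add: d_def)
    then show ?thesis using that by (rule lift_Suc_mono_le)
  qed
  have s: "g x0 - g (x0 - 1) = d (x0 - 1)" using x0 by (simp add: d_def)
  show ?thesis
  proof (cases "x0 \<le> x")
    case True
    have "g x - g x0 \<ge> (real x - real x0) * d (x0 - 1)" using True
    proof (induction rule: dec_induct)
      case base then show ?case by simp
    next
      case (step n)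
      have "d (x0 - 1) \<le> d n" using step x0 by (intro dmono) auto
      then have "g (Suc n) - g x0 = (g n - g x0) + d n" by (simp add: d_def)
      with step \<open>d (x0 - 1) \<le> d n\<close> show ?case by (simp add: algebra_simps)
    qed
    then show ?thesis using s by (simp add: algebra_simps)
  next
    case False
    then have "x \<le> x0" by simp
    have "g x0 - g x \<le> (real x0 - real x) * d (x0 - 1)" using \<open>x \<le> x0\<close>
    proof (induction rule: inc_induct)
      case base then show ?case by simp
    next
      case (step n)
      have "d n \<le> d (x0 - 1)" using step by (intro dmono) auto
      have "g x0 - g n = (g x0 - g (Suc n)) + d n" by (simp add: d_def)
      with step \<open>d n \<le> d (x0 - 1)\<close> show ?case by (simp add: algebra_simps)
    qed
    then show ?thesis using s by (simp add: algebra_simps)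
  qed
qed

definition phi :: "nat \<Rightarrow> (nat \<Rightarrow> nat) \<Rightarrow> nat \<Rightarrow> real" where
  "phi Lam L x = (\<Sum>r = 1..Lam. real (L r) * real (x choose r) / real (Lam choose r))"

lemma phi_diff: "phi Lam L (Suc y) - phi Lam L y
   = (\<Sum>r = 1..Lam. real (L r) * real (y choose (r - 1)) / real (Lam choose r))"
proof -
  have "phi Lam L (Suc y) - phi Lam L y = (\<Sum>r = 1..Lam. real (L r) * real (Suc y choose r) / real (Lam choose r)
     - real (L r) * real (y choose r) / real (Lam choose r))"
    unfolding phi_def by (simp add: sum_subtractf)
  also have "\<dots> = (\<Sum>r = 1..Lam. real (L r) * real (y choose (r - 1)) / real (Lam choose r))"
  proof (rule sum.cong)
    fix r assume "r \<in> {1..Lam}"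
    then obtain q where r: "r = Suc q" by (cases r) auto
    show "real (L r) * real (Suc y choose r) / real (Lam choose r)
     - real (L r) * real (y choose r) / real (Lam choose r) = real (L r) * real (y choose (r - 1)) / real (Lam choose r)"
      unfolding r by (simp add: diff_divide_distrib[symmetric] algebra_simps)
  qed simp
  finally show ?thesis .
qed

lemma phi_convex: "phi Lam L (Suc y) - phi Lam L y \<le> phi Lam L (Suc (Suc y)) - phi Lam L (Suc y)"
  unfolding phi_diff
  by (intro sum_mono divide_right_mono mult_left_mono) (auto intro: binomial_right_mono)

lemma phi_mono_step: "phi Lam L y \<le> phi Lam L (Suc y)"
proof -
  have "0 \<le> phi Lam L (Suc y) - phi Lam L y" unfolding phi_diff by (intro sum_nonneg) auto
  then show ?thesis by simp
qed

lemma phi_nonneg: "0 \<le> phi Lam L y"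
  unfolding phi_def by (intro sum_nonneg) auto

lemma phi_zero: "phi Lam L 0 = 0"
  unfolding phi_def by (intro sum.neutral) auto

lemma phi_tangent:
  fixes x0 x :: nat
  shows "\<exists>s\<ge>0. \<forall>x. phi Lam L x \<ge> phi Lam L x0 + (real x - real x0) * s"
proof (cases "x0 = 0")
  case True
  then show ?thesis using phi_nonneg[of Lam L] phi_zero[of Lam L] by (intro exI[of _ 0]) auto
next
  case False
  then have "1 \<le> x0" by simp
  moreover have "0 \<le> phi Lam L x0 - phi Lam L (x0 - 1)"
    using phi_mono_step[of Lam L "x0 - 1"] False by simp
  ultimately show ?thesis
    using tangent_aux[of "phi Lam L" x0, OF phi_convex] by blast
qed

lemma f_phi:
  assumes "i \<le> Lam"
  shows "f_profile Lam L i = phi Lam L (Lam - i)"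
proof -
  have "f_profile Lam L i = (\<Sum>r = 1..Lam - i. real (L r) * real ((Lam - r) choose i) / real (Lam choose i))"
    unfolding f_profile_def by (simp add: sum_divide_distrib)
  also have "\<dots> = (\<Sum>r = 1..Lam - i. real (L r) * real ((Lam - i) choose r) / real (Lam choose r))"
  proof (rule sum.cong)
    fix r assume r: "r \<in> {1..Lam - i}"
    have "(Lam choose (Lam - i)) * ((Lam - i) choose r) = (Lam choose r) * ((Lam - r) choose (Lam - i - r))"
      using r by (intro choose_mult) auto
    moreover have "Lam choose (Lam - i) = Lam choose i" using assms by (simp add: binomial_symmetric[symmetric])
    moreover have "(Lam - r) choose (Lam - i - r) = (Lam - r) choose i"
      using r assms binomial_symmetric[of "Lam - i - r" "Lam - r"] by auto
    ultimately have e: "real (Lam choose i) * real ((Lam - i) choose r) = real (Lam choose r) * real ((Lam - r) choose i)"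
      by (metis of_nat_mult)
    have p1: "real (Lam choose i) > 0" using assms by simp
    have "r \<le> Lam" using r by auto
    then have p2: "real (Lam choose r) > 0" by simp
    show "real (L r) * real ((Lam - r) choose i) / real (Lam choose i) = real (L r) * real ((Lam - i) choose r) / real (Lam choose r)"
      using e p1 p2 by (simp add: field_simps)
  qed simp
  also have "\<dots> = phi Lam L (Lam - i)"
  proof -
    have "{1..Lam} = {1..Lam - i} \<union> {Lam - i + 1..Lam}" by auto
    then have "phi Lam L (Lam - i) = (\<Sum>r = 1..Lam - i. real (L r) * real ((Lam - i) choose r) / real (Lam choose r))
       + (\<Sum>r = Lam - i + 1..Lam. real (L r) * real ((Lam - i) choose r) / real (Lam choose r))"
      unfolding phi_def by (subst sum.union_disjoint[symmetric]) auto
    moreover have "(\<Sum>r = Lam - i + 1..Lam. real (L r) * real ((Lam - i) choose r) / real (Lam choose r)) = 0"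
      by (intro sum.neutral) auto
    ultimately show ?thesis by simp
  qed
  finally show ?thesis .
qed


lemma f_lower_bound:
  assumes tL: "t \<le> Lam" and c0: "\<forall>i\<le>Lam. c i \<ge> 0" and c1: "(\<Sum>i\<le>Lam. c i) = 1"
    and c2: "(\<Sum>i\<le>Lam. c i * real i) = real t"
  shows "(\<Sum>i\<le>Lam. c i * f_profile Lam L i) \<ge> f_profile Lam L t"
proof -
  obtain s where s0: "s \<ge> 0" and st: "\<And>x. phi Lam L x \<ge> phi Lam L (Lam - t) + (real x - real (Lam - t)) * s"
    using phi_tangent[of Lam L "Lam - t"] by blast
  have "(\<Sum>i\<le>Lam. c i * f_profile Lam L i) \<ge> (\<Sum>i\<le>Lam. c i * (phi Lam L (Lam - t) + (real Lam - real i - real (Lam - t)) * s))"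
  proof (rule sum_mono)
    fix i assume i: "i \<in> {..Lam}"
    have "phi Lam L (Lam - i) \<ge> phi Lam L (Lam - t) + (real Lam - real i - real (Lam - t)) * s"
      using st[of "Lam - i"] i by (simp add: of_nat_diff)
    then show "c i * (phi Lam L (Lam - t) + (real Lam - real i - real (Lam - t)) * s) \<le> c i * f_profile Lam L i"
      using i c0 f_phi[of i Lam L] by (simp add: mult_left_mono)
  qed
  also have "(\<Sum>i\<le>Lam. c i * (phi Lam L (Lam - t) + (real Lam - real i - real (Lam - t)) * s))
     = phi Lam L (Lam - t) * (\<Sum>i\<le>Lam. c i) + s * (real Lam - real (Lam - t)) * (\<Sum>i\<le>Lam. c i) - s * (\<Sum>i\<le>Lam. c i * real i)"
    by (simp add: sum.distrib sum_subtractf sum_distrib_left sum_distrib_right algebra_simps)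
  also have "\<dots> = phi Lam L (Lam - t)" using c1 c2 tL by (simp add: of_nat_diff)
  also have "\<dots> = f_profile Lam L t" using f_phi[OF tL] by simp
  finally show ?thesis .
qed

lemma conv_env_eq:
  assumes tL: "t \<le> Lam"
  shows "lower_conv_env Lam (f_profile Lam L) (real t) = f_profile Lam L t"
  unfolding lower_conv_env_def
proof (rule cInf_eq_minimum)
  let ?c = "\<lambda>i. if i = t then (1::real) else 0"
  have "(\<Sum>i\<le>Lam. ?c i * f_profile Lam L i) = (\<Sum>i\<le>Lam. if i = t then f_profile Lam L i else 0)"
    by (rule sum.cong) auto
  then have "(\<Sum>i\<le>Lam. ?c i * f_profile Lam L i) = f_profile Lam L t" using tL by (simp add: sum.delta)
  moreover have "(\<Sum>i\<le>Lam. ?c i) = 1" using tL by (simp add: sum.delta)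
  moreover have "(\<Sum>i\<le>Lam. ?c i * real i) = (\<Sum>i\<le>Lam. if i = t then real i else 0)"
    by (rule sum.cong) auto
  then have "(\<Sum>i\<le>Lam. ?c i * real i) = real t" using tL by (simp add: sum.delta)
  ultimately show "f_profile Lam L t \<in> {\<Sum>i\<le>Lam. c i * f_profile Lam L i |c.
        (\<forall>i\<le>Lam. 0 \<le> c i) \<and> (\<Sum>i\<le>Lam. c i) = 1 \<and> (\<Sum>i\<le>Lam. c i * real i) = real t}"
    by (intro CollectI exI[of _ ?c]) auto
next
  fix x assume "x \<in> {\<Sum>i\<le>Lam. c i * f_profile Lam L i |c.
        (\<forall>i\<le>Lam. 0 \<le> c i) \<and> (\<Sum>i\<le>Lam. c i) = 1 \<and> (\<Sum>i\<le>Lam. c i * real i) = real t}"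
  then show "f_profile Lam L t \<le> x" using f_lower_bound[OF tL] by blast
qed


lemma perm_prefix_count:
  assumes "finite A" "C \<subseteq> A" "r \<le> card A"
  shows "card {xs \<in> permutations_of_set A. set (take r xs) \<subseteq> C} = (card C choose r) * fact r * fact (card A - r)"
  using assms
proof (induction r arbitrary: A C)
  case 0
  then show ?case by simp
next
  case (Suc r)
  have fC: "finite C" using Suc.prems finite_subset by blast
  have Ane: "A \<noteq> {}" using Suc.prems by auto
  have eq: "{xs \<in> permutations_of_set A. set (take (Suc r) xs) \<subseteq> C}
     = (\<Union>x\<in>C. (\<lambda>ys. x # ys) ` {ys \<in> permutations_of_set (A - {x}). set (take r ys) \<subseteq> C - {x}})"
  proof (intro equalityI subsetI)
    fix xs assume xs: "xs \<in> {xs \<in> permutations_of_set A. set (take (Suc r) xs) \<subseteq> C}"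
    then have "xs \<noteq> []" using Ane by (auto simp: permutations_of_set_def)
    then obtain x ys where xys: "xs = x # ys" by (cases xs) auto
    have "x \<in> C" using xs xys by auto
    moreover have "ys \<in> permutations_of_set (A - {x})" using xs xys by (auto simp: permutations_of_set_def)
    moreover have "set (take r ys) \<subseteq> C - {x}" using xs xys
      by (auto simp: permutations_of_set_def dest: in_set_takeD)
    ultimately show "xs \<in> (\<Union>x\<in>C. (\<lambda>ys. x # ys) ` {ys \<in> permutations_of_set (A - {x}). set (take r ys) \<subseteq> C - {x}})"
      using xys by blast
  next
    fix xs assume "xs \<in> (\<Union>x\<in>C. (\<lambda>ys. x # ys) ` {ys \<in> permutations_of_set (A - {x}). set (take r ys) \<subseteq> C - {x}})"
    then obtain x ys where x: "x \<in> C" and ys: "ys \<in> permutations_of_set (A - {x})" "set (take r ys) \<subseteq> C - {x}"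
      and xys: "xs = x # ys" by blast
    have "x \<in> A" using x Suc.prems by auto
    then show "xs \<in> {xs \<in> permutations_of_set A. set (take (Suc r) xs) \<subseteq> C}"
      using x ys xys by (auto simp: permutations_of_set_def)
  qed
  have each: "card ((\<lambda>ys. x # ys) ` {ys \<in> permutations_of_set (A - {x}). set (take r ys) \<subseteq> C - {x}})
      = (card C - 1 choose r) * fact r * fact (card A - Suc r)" if x: "x \<in> C" for x
  proof -
    have "card ((\<lambda>ys. x # ys) ` {ys \<in> permutations_of_set (A - {x}). set (take r ys) \<subseteq> C - {x}})
       = card {ys \<in> permutations_of_set (A - {x}). set (take r ys) \<subseteq> C - {x}}"
      by (rule card_image) (auto simp: inj_on_def)
    also have "\<dots> = (card (C - {x}) choose r) * fact r * fact (card (A - {x}) - r)"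
      using Suc.prems x by (intro Suc.IH) auto
    also have "\<dots> = (card C - 1 choose r) * fact r * fact (card A - Suc r)"
      using Suc.prems x fC by (auto simp: card_Diff_singleton)
    finally show ?thesis .
  qed
  have "card {xs \<in> permutations_of_set A. set (take (Suc r) xs) \<subseteq> C}
      = (\<Sum>x\<in>C. card ((\<lambda>ys. x # ys) ` {ys \<in> permutations_of_set (A - {x}). set (take r ys) \<subseteq> C - {x}}))"
    unfolding eq using fC Suc.prems
  proof (intro card_UN_disjoint)
    show "\<forall>x\<in>C. finite ((\<lambda>ys. x # ys) ` {ys \<in> permutations_of_set (A - {x}). set (take r ys) \<subseteq> C - {x}})"
      using Suc.prems by auto
  qed (auto simp: permutations_of_set_def)
  also have "\<dots> = card C * ((card C - 1 choose r) * fact r * fact (card A - Suc r))"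
    using each by simp
  also have "\<dots> = (card C choose Suc r) * fact (Suc r) * fact (card A - Suc r)"
  proof -
    have "Suc r * (card C choose Suc r) = card C * ((card C - 1) choose r)"
      using times_binomial_minus1_eq[of "Suc r" "card C"] by simp
    then have "(card C choose Suc r) * fact (Suc r) * fact (card A - Suc r)
        = (Suc r * (card C choose Suc r)) * fact r * fact (card A - Suc r)"
      by (simp only: fact_Suc of_nat_id mult.assoc mult.commute mult.left_commute)
    also have "\<dots> = card C * ((card C - 1 choose r) * fact r * fact (card A - Suc r))"
      using \<open>Suc r * (card C choose Suc r) = card C * ((card C - 1) choose r)\<close>
      by (simp only: mult.assoc)
    finally show ?thesis by simp
  qed
  finally show ?case .
qed


lemma index_bound:
  fixes E :: "(nat \<times> nat \<Rightarrow> bool) \<Rightarrow> bool list"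
    and D :: "nat \<Rightarrow> bool list \<Rightarrow> (nat \<times> nat \<Rightarrow> bool) \<Rightarrow> nat \<Rightarrow> bool"
    and Zc :: "nat \<Rightarrow> (nat \<times> nat) set" and dk lv :: "nat \<Rightarrow> nat"
  assumes len: "\<forall>W. length (E W) = B"
    and dec: "\<forall>k<K. \<forall>W. \<forall>j<F. D k (E W) (mask (Zc k) W) j = W (dk k, j)"
    and fin: "finite A"
    and own: "\<forall>p\<in>A. \<exists>k<K. fst p = dk k \<and> snd p < F \<and> (\<forall>k2<K. p \<in> Zc k2 \<longrightarrow> lv k < lv k2)"
  shows "card A \<le> B"
proof -
  have inj: "inj_on (\<lambda>X. E (\<lambda>p. p \<in> X)) (Pow A)"
  proof (rule inj_onI)
    fix X Y assume X: "X \<in> Pow A" and Y: "Y \<in> Pow A" and e: "E (\<lambda>p. p \<in> X) = E (\<lambda>p. p \<in> Y)"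
    have claim: "\<forall>k<K. lv k = m \<longrightarrow> (\<forall>j<F. ((dk k, j) \<in> X) = ((dk k, j) \<in> Y))" for m
    proof (induction m rule: less_induct)
      case (less m)
      show ?case
      proof (intro allI impI)
        fix k j assume k: "k < K" and lk: "lv k = m" and j: "j < F"
        have m: "mask (Zc k) (\<lambda>p. p \<in> X) = mask (Zc k) (\<lambda>p. p \<in> Y)"
        proof
          fix p
          show "mask (Zc k) (\<lambda>p. p \<in> X) p = mask (Zc k) (\<lambda>p. p \<in> Y) p"
          proof (cases "p \<in> Zc k \<and> p \<in> A")
            case True
            then obtain k' where k': "k' < K" "fst p = dk k'" "snd p < F" "lv k' < lv k"
              using own k by blast
            then have "((dk k', snd p) \<in> X) = ((dk k', snd p) \<in> Y)"
              using less.IH[of "lv k'"] lk by blast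
            moreover have "p = (dk k', snd p)" using k' by (cases p) auto
            ultimately show ?thesis unfolding mask_def by metis
          next
            case False
            then show ?thesis using X Y unfolding mask_def by auto
          qed
        qed
        have "((dk k, j) \<in> X) = D k (E (\<lambda>p. p \<in> X)) (mask (Zc k) (\<lambda>p. p \<in> X)) j"
          using dec k j by simp
        also have "\<dots> = D k (E (\<lambda>p. p \<in> Y)) (mask (Zc k) (\<lambda>p. p \<in> Y)) j" using e m by simp
        also have "\<dots> = ((dk k, j) \<in> Y)" using dec k j by simp
        finally show "((dk k, j) \<in> X) = ((dk k, j) \<in> Y)" .
      qed
    qed
    show "X = Y"
    proof (intro set_eqI iffI)
      fix p assume "p \<in> X"
      then have "p \<in> A" using X by auto
      then obtain k where k: "k < K" "fst p = dk k" "snd p < F" using own by blast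
      then have "p = (dk k, snd p)" by (cases p) auto
      then show "p \<in> Y" using claim[of "lv k"] k \<open>p \<in> X\<close> by metis
    next
      fix p assume "p \<in> Y"
      then have "p \<in> A" using Y by auto
      then obtain k where k: "k < K" "fst p = dk k" "snd p < F" using own by blast
      then have "p = (dk k, snd p)" by (cases p) auto
      then show "p \<in> X" using claim[of "lv k"] k \<open>p \<in> Y\<close> by metis
    qed
  qed
  have sub: "(\<lambda>X. E (\<lambda>p. p \<in> X)) ` Pow A \<subseteq> {xs. set xs \<subseteq> (UNIV :: bool set) \<and> length xs = B}"
    using len by auto
  have "(2::nat) ^ card A = card (Pow A)" using fin by (simp add: card_Pow)
  also have "\<dots> = card ((\<lambda>X. E (\<lambda>p. p \<in> X)) ` Pow A)" using inj by (simp add: card_image)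
  also have "\<dots> \<le> card {xs. set xs \<subseteq> (UNIV :: bool set) \<and> length xs = B}"
    by (rule card_mono[OF _ sub]) (rule finite_lists_length_eq, simp)
  also have "\<dots> = 2 ^ B" using card_lists_length_eq[of "UNIV :: bool set" B] by simp
  finally show ?thesis by (rule power_le_imp_le_exp[rotated]) simp
qed


definition psum :: "(nat \<Rightarrow> nat) \<Rightarrow> nat \<Rightarrow> nat" where
  "psum L r = (\<Sum>q = 1..r. L q)"

definition grp :: "(nat \<Rightarrow> nat) \<Rightarrow> nat \<Rightarrow> nat" where
  "grp L k = (LEAST r. k < psum L r)"

lemma psum_Suc: "psum L (Suc r) = psum L r + L (Suc r)"
  unfolding psum_def by simp

lemma psum_mono: "r \<le> r' \<Longrightarrow> psum L r \<le> psum L r'"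
proof (induction rule: dec_induct)
  case (step n) then show ?case using psum_Suc[of L n] by simp
qed simp

lemma psum_0: "psum L 0 = 0" unfolding psum_def by simp

lemma grp_props:
  assumes "k < psum L Lam"
  shows "k < psum L (grp L k)" "1 \<le> grp L k" "grp L k \<le> Lam" "psum L (grp L k - 1) \<le> k"
proof -
  show k1: "k < psum L (grp L k)" unfolding grp_def by (rule LeastI[of _ Lam]) (rule assms)
  show "grp L k \<le> Lam" unfolding grp_def by (rule Least_le) (rule assms)
  show g1: "1 \<le> grp L k" using k1 psum_0[of L] by (cases "grp L k") auto
  have "\<not> k < psum L (grp L k - 1)" unfolding grp_def
    by (rule not_less_Least) (use g1 in \<open>simp add: grp_def\<close>)
  then show "psum L (grp L k - 1) \<le> k" by simp
qed

lemma grp_set: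
  assumes "1 \<le> r" "r \<le> Lam"
  shows "{k. k < psum L Lam \<and> grp L k = r} = {psum L (r - 1)..<psum L r}"
proof (intro equalityI subsetI)
  fix k assume "k \<in> {k. k < psum L Lam \<and> grp L k = r}"
  then show "k \<in> {psum L (r - 1)..<psum L r}" using grp_props[of k L Lam] by auto
next
  fix k assume k: "k \<in> {psum L (r - 1)..<psum L r}"
  then have kL: "k < psum L Lam" using psum_mono[OF assms(2), of L] by auto
  have "grp L k \<le> r" unfolding grp_def by (rule Least_le) (use k in auto)
  moreover have "\<not> grp L k < r"
  proof
    assume "grp L k < r"
    then have "psum L (grp L k) \<le> psum L (r - 1)" by (intro psum_mono) auto
    then show False using grp_props(1)[OF kL] k by auto
  qed
  ultimately show "k \<in> {k. k < psum L Lam \<and> grp L k = r}" using kL by auto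
qed

lemma grp_card:
  assumes "1 \<le> r" "r \<le> Lam"
  shows "card {k. k < psum L Lam \<and> grp L k = r} = L r"
proof -
  have "psum L r = psum L (r - 1) + L r" using assms psum_Suc[of L "r - 1"] by simp
  then show ?thesis using grp_set[OF assms] by simp
qed

lemma mod_shift_inj:
  fixes N :: nat
  assumes "k < N" "k' < N" "(k + sh) mod N = (k' + sh) mod N"
  shows "k = k'"
proof (rule ccontr)
  assume ne: "k \<noteq> k'"
  have *: "\<And>x y. x < N \<Longrightarrow> y < N \<Longrightarrow> x < y \<Longrightarrow> (x + sh) mod N = (y + sh) mod N \<Longrightarrow> False"
  proof -
    fix x y assume xy: "x < N" "y < N" "x < y" "(x + sh) mod N = (y + sh) mod N"
    then have "N dvd (y + sh) - (x + sh)" using mod_eq_dvd_iff_nat[of "x + sh" "y + sh" N] by simp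
    then have "N dvd y - x" by simp
    moreover have "0 < y - x" "y - x < N" using xy by auto
    ultimately show False using nat_dvd_not_less by blast
  qed
  show False using ne assms *[of k k'] *[of k' k] by (cases "k < k'") auto
qed

lemma mod_shift_bij:
  fixes N :: nat
  assumes "0 < N"
  shows "bij_betw (\<lambda>sh. (k + sh) mod N) {..<N} {..<N}"
proof -
  have inj: "inj_on (\<lambda>sh. (k + sh) mod N) {..<N}"
  proof (rule inj_onI)
    fix x y assume "x \<in> {..<N}" "y \<in> {..<N}" "(k + x) mod N = (k + y) mod N"
    then show "x = y" using mod_shift_inj[of x N y k] by (simp add: add.commute)
  qed
  have "(\<lambda>sh. (k + sh) mod N) ` {..<N} \<subseteq> {..<N}" using assms by auto
  then have "(\<lambda>sh. (k + sh) mod N) ` {..<N} = {..<N}"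
    using inj by (intro endo_inj_surj) auto
  then show ?thesis using inj by (simp add: bij_betw_def)
qed

lemma double_count:
  assumes "finite A" "finite B"
  shows "(\<Sum>a\<in>A. card {b\<in>B. R a b}) = (\<Sum>b\<in>B. card {a\<in>A. R a b})"
proof -
  have "(\<Sum>a\<in>A. card {b\<in>B. R a b}) = (\<Sum>a\<in>A. \<Sum>b\<in>B. if R a b then 1 else 0)"
    using assms by (simp add: sum.If_cases Int_def)
  also have "\<dots> = (\<Sum>b\<in>B. \<Sum>a\<in>A. if R a b then 1 else 0)" by (rule sum.swap)
  also have "\<dots> = (\<Sum>b\<in>B. card {a\<in>A. R a b})"
    using assms by (simp add: sum.If_cases Int_def)
  finally show ?thesis .
qed


lemma perm_bound:
  fixes Z :: "nat \<Rightarrow> (nat \<times> nat) set"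
    and enc :: "(nat \<Rightarrow> nat) \<Rightarrow> (nat \<Rightarrow> nat) \<Rightarrow> (nat \<times> nat \<Rightarrow> bool) \<Rightarrow> bool list"
    and dec :: "(nat \<Rightarrow> nat) \<Rightarrow> (nat \<Rightarrow> nat) \<Rightarrow> nat \<Rightarrow> bool list \<Rightarrow> (nat \<times> nat \<Rightarrow> bool) \<Rightarrow> nat \<Rightarrow> bool"
  assumes sumL: "psum L Lam = K" and KN: "K \<le> N" and N0: "0 < N"
    and ps: "ps \<in> permutations_of_set {..<Lam}"
    and scheme: "\<forall>a d. valid_assoc K Lam L a \<and> valid_demand N K d \<longrightarrow>
           (\<exists>B::nat. real B \<le> T * real F \<and>
              (\<forall>W. length (enc a d W) = B) \<and>
              (\<forall>k<K. \<forall>W. \<forall>j<F.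
                 dec a d k (enc a d W) (mask (Z (a k)) W) j = W (d k, j)))"
  shows "real (\<Sum>r = 1..Lam. L r * card {p \<in> {..<N} \<times> {..<F}. set (take r ps) \<subseteq> {l\<in>{..<Lam}. p \<notin> Z l}})
     \<le> real N * T * real F"
proof -
  have setps: "set ps = {..<Lam}" and dps: "distinct ps" using ps by (auto simp: permutations_of_set_def)
  then have lenps: "length ps = Lam" using distinct_card by fastforce
  define a where "a k = ps ! (grp L k - 1)" for k
  have gr: "1 \<le> grp L k \<and> grp L k \<le> Lam" if "k < K" for k using grp_props[of k L Lam] that sumL by auto
  have aeq: "a k = ps ! (r - 1) \<longleftrightarrow> grp L k = r" if "k < K" "1 \<le> r" "r \<le> Lam" for k r
  proof -
    have "a k = ps ! (r - 1) \<longleftrightarrow> grp L k - 1 = r - 1"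
    proof -
      have "grp L k - 1 < length ps" "r - 1 < length ps" using gr[OF that(1)] that lenps by auto
      then show ?thesis unfolding a_def using nth_eq_iff_index_eq[OF dps] by blast
    qed
    then show ?thesis using gr[OF that(1)] that by (metis Suc_pred' diff_Suc_1 less_le_trans zero_less_one)
  qed
  have v1: "\<forall>k<K. a k < Lam"
  proof (intro allI impI)
    fix k assume "k < K"
    then have "grp L k - 1 < length ps" using gr[of k] lenps by auto
    then show "a k < Lam" unfolding a_def using setps nth_mem[of "grp L k - 1" ps] by blast
  qed
  have v2: "bij_betw (\<lambda>r. ps ! (r - 1)) {1..Lam} {..<Lam}"
  proof (rule bij_betw_imageI)
    show "inj_on (\<lambda>r. ps ! (r - 1)) {1..Lam}"
    proof (rule inj_onI)
      fix x y assume "x \<in> {1..Lam}" "y \<in> {1..Lam}" "ps ! (x - 1) = ps ! (y - 1)"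
      moreover have "x - 1 < length ps" "y - 1 < length ps" using lenps \<open>x \<in> {1..Lam}\<close> \<open>y \<in> {1..Lam}\<close> by auto
      ultimately show "x = y" using nth_eq_iff_index_eq[OF dps] by force
    qed
    show "(\<lambda>r. ps ! (r - 1)) ` {1..Lam} = {..<Lam}"
    proof (intro equalityI subsetI)
      fix x assume "x \<in> (\<lambda>r. ps ! (r - 1)) ` {1..Lam}"
      then obtain r where r: "r \<in> {1..Lam}" "x = ps ! (r - 1)" by blast
      then have "r - 1 < length ps" using lenps by auto
      then show "x \<in> {..<Lam}" using r setps nth_mem by blast
    next
      fix x assume "x \<in> {..<Lam}"
      then obtain i where "i < Lam" "ps ! i = x" using setps lenps by (metis in_set_conv_nth)
      then show "x \<in> (\<lambda>r. ps ! (r - 1)) ` {1..Lam}" by (intro image_eqI[of _ _ "Suc i"]) auto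
    qed
  qed
  have v3: "\<forall>r\<in>{1..Lam}. card {k. k < K \<and> a k = ps ! (r - 1)} = L r"
  proof
    fix r assume r: "r \<in> {1..Lam}"
    have "{k. k < K \<and> a k = ps ! (r - 1)} = {k. k < psum L Lam \<and> grp L k = r}"
      using aeq r sumL by auto
    then show "card {k. k < K \<and> a k = ps ! (r - 1)} = L r" using grp_card[of r Lam L] r by simp
  qed
  have va: "valid_assoc K Lam L a"
    unfolding valid_assoc_def using v1 v2 v3 by blast
  define Cov where "Cov r = \<Union> (Z ` set (take r ps))" for r
  define g where "g n r = card {b. b < F \<and> (n, b) \<notin> Cov r}" for n r
  have shbound: "real (\<Sum>k<K. g ((k + sh) mod N) (grp L k)) \<le> T * real F" if sh: "sh < N" for sh
  proof -
    define d where "d k = (k + sh) mod N" for k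
    have vd: "valid_demand N K d" unfolding valid_demand_def d_def using N0 by auto
    obtain B where B: "real B \<le> T * real F" "\<forall>W. length (enc a d W) = B"
      "\<forall>k<K. \<forall>W. \<forall>j<F. dec a d k (enc a d W) (mask (Z (a k)) W) j = W (d k, j)"
      using scheme va vd by blast
    define A where "A = (\<Union>k\<in>{..<K}. (\<lambda>b. (d k, b)) ` {b. b < F \<and> (d k, b) \<notin> Cov (grp L k)})"
    have dinj: "d k = d k' \<Longrightarrow> k < K \<Longrightarrow> k' < K \<Longrightarrow> k = k'" for k k'
      unfolding d_def using KN mod_shift_inj[of k N k' sh] by auto
    have cardA: "card A = (\<Sum>k<K. g (d k) (grp L k))"
      unfolding A_def
    proof (subst card_UN_disjoint)
      show "(\<Sum>i<K. card ((\<lambda>b. (d i, b)) ` {b. b < F \<and> (d i, b) \<notin> Cov (grp L i)})) = (\<Sum>k<K. g (d k) (grp L k))"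
        unfolding g_def by (intro sum.cong refl card_image) (auto simp: inj_on_def)
    qed (use dinj in auto)
    have "card A \<le> B"
    proof (rule index_bound[where E = "enc a d" and D = "dec a d" and Zc = "\<lambda>k. Z (a k)" and dk = d
          and lv = "grp L" and K = K and F = F])
      show "finite A" unfolding A_def by auto
      show "\<forall>W. length (enc a d W) = B" using B by simp
      show "\<forall>k<K. \<forall>W. \<forall>j<F. dec a d k (enc a d W) (mask (Z (a k)) W) j = W (d k, j)" using B by simp
      show "\<forall>p\<in>A. \<exists>k<K. fst p = d k \<and> snd p < F \<and> (\<forall>k2<K. p \<in> Z (a k2) \<longrightarrow> grp L k < grp L k2)"
      proof
        fix p assume "p \<in> A"
        then obtain k b where k: "k < K" "b < F" "(d k, b) \<notin> Cov (grp L k)" "p = (d k, b)"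
          unfolding A_def by auto
        have "grp L k < grp L k2" if k2: "k2 < K" "p \<in> Z (a k2)" for k2
        proof (rule ccontr)
          assume "\<not> grp L k < grp L k2"
          then have "grp L k2 - 1 < grp L k" using gr[OF k2(1)] by auto
          moreover have "grp L k \<le> length ps" using gr[OF k(1)] lenps by auto
          ultimately have "a k2 \<in> set (take (grp L k) ps)"
            unfolding a_def by (auto simp: in_set_conv_nth intro!: exI[of _ "grp L k2 - 1"])
          then have "p \<in> Cov (grp L k)" unfolding Cov_def using k2 by auto
          then show False using k by simp
        qed
        then show "\<exists>k<K. fst p = d k \<and> snd p < F \<and> (\<forall>k2<K. p \<in> Z (a k2) \<longrightarrow> grp L k < grp L k2)"
          using k by auto
      qed
    qed
    then have "real (\<Sum>k<K. g (d k) (grp L k)) \<le> T * real F"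
      using B(1) cardA by (metis of_nat_le_iff order_trans)
    then show ?thesis unfolding d_def .
  qed
  have S0: "real (\<Sum>sh<N. \<Sum>k<K. g ((k + sh) mod N) (grp L k)) \<le> (\<Sum>sh<N. T * real F)"
    unfolding of_nat_sum[of _ "{..<N}"] by (intro sum_mono) (use shbound in auto)
  have S1: "real (\<Sum>sh<N. \<Sum>k<K. g ((k + sh) mod N) (grp L k)) \<le> real N * T * real F"
    using S0 by simp
  have S2: "(\<Sum>sh<N. \<Sum>k<K. g ((k + sh) mod N) (grp L k)) = (\<Sum>k<K. \<Sum>n<N. g n (grp L k))"
  proof -
    have "(\<Sum>sh<N. \<Sum>k<K. g ((k + sh) mod N) (grp L k)) = (\<Sum>k<K. \<Sum>sh<N. g ((k + sh) mod N) (grp L k))"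
      by (rule sum.swap)
    also have "\<dots> = (\<Sum>k<K. \<Sum>n<N. g n (grp L k))"
      by (intro sum.cong refl sum.reindex_bij_betw mod_shift_bij N0)
    finally show ?thesis .
  qed
  have S3: "(\<Sum>k<K. \<Sum>n<N. g n (grp L k)) = (\<Sum>r = 1..Lam. \<Sum>k\<in>{k. k \<in> {..<K} \<and> grp L k = r}. \<Sum>n<N. g n (grp L k))"
  proof (rule sum.group[symmetric])
    show "grp L ` {..<K} \<subseteq> {1..Lam}"
    proof
      fix x assume "x \<in> grp L ` {..<K}"
      then obtain k where "k < K" "x = grp L k" by blast
      then show "x \<in> {1..Lam}" using gr[of k] by simp
    qed
  qed auto
  have S4: "(\<Sum>r = 1..Lam. \<Sum>k\<in>{k. k \<in> {..<K} \<and> grp L k = r}. \<Sum>n<N. g n (grp L k)) = (\<Sum>r = 1..Lam. L r * (\<Sum>n<N. g n r))"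
  proof (rule sum.cong)
    fix r assume r: "r \<in> {1..Lam}"
    have "{k. k \<in> {..<K} \<and> grp L k = r} = {k. k < psum L Lam \<and> grp L k = r}" using sumL by auto
    then have "card {k. k \<in> {..<K} \<and> grp L k = r} = L r" using grp_card[of r Lam L] r by simp
    then show "(\<Sum>k\<in>{k. k \<in> {..<K} \<and> grp L k = r}. \<Sum>n<N. g n (grp L k)) = L r * (\<Sum>n<N. g n r)"
      by simp
  qed simp
  have S5: "(\<Sum>r = 1..Lam. L r * (\<Sum>n<N. g n r))
     = (\<Sum>r = 1..Lam. L r * card {p \<in> {..<N} \<times> {..<F}. set (take r ps) \<subseteq> {l\<in>{..<Lam}. p \<notin> Z l}})"
  proof (rule sum.cong)
    fix r assume r: "r \<in> {1..Lam}"
    have tk: "set (take r ps) \<subseteq> {..<Lam}"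
      using set_take_subset[of r ps] unfolding setps .
    have Aeq: "{p \<in> {..<N} \<times> {..<F}. set (take r ps) \<subseteq> {l\<in>{..<Lam}. p \<notin> Z l}}
        = Sigma {..<N} (\<lambda>n. {b. b < F \<and> (n, b) \<notin> Cov r})"
    proof -
      have iff: "set (take r ps) \<subseteq> {l\<in>{..<Lam}. p \<notin> Z l} \<longleftrightarrow> p \<notin> Cov r" for p
      proof -
        have "p \<in> Cov r \<longleftrightarrow> (\<exists>l\<in>set (take r ps). p \<in> Z l)" unfolding Cov_def by blast
        moreover have "set (take r ps) \<subseteq> {l\<in>{..<Lam}. p \<notin> Z l} \<longleftrightarrow> (\<forall>l\<in>set (take r ps). p \<notin> Z l)"
          using tk by blast
        ultimately show ?thesis by blast
      qed
      show ?thesis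
      proof (intro equalityI subsetI)
        fix p assume "p \<in> {p \<in> {..<N} \<times> {..<F}. set (take r ps) \<subseteq> {l\<in>{..<Lam}. p \<notin> Z l}}"
        then show "p \<in> Sigma {..<N} (\<lambda>n. {b. b < F \<and> (n, b) \<notin> Cov r})"
          using iff[of p] by (cases p) simp
      next
        fix p assume "p \<in> Sigma {..<N} (\<lambda>n. {b. b < F \<and> (n, b) \<notin> Cov r})"
        then show "p \<in> {p \<in> {..<N} \<times> {..<F}. set (take r ps) \<subseteq> {l\<in>{..<Lam}. p \<notin> Z l}}"
          using iff[of p] by (cases p) simp
      qed
    qed
    have Beq: "card (Sigma {..<N} (\<lambda>n. {b. b < F \<and> (n, b) \<notin> Cov r})) = (\<Sum>n<N. g n r)"
      unfolding g_def by (rule card_SigmaI) auto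
    show "L r * (\<Sum>n<N. g n r) = L r * card {p \<in> {..<N} \<times> {..<F}. set (take r ps) \<subseteq> {l\<in>{..<Lam}. p \<notin> Z l}}"
      by (simp only: Aeq Beq)
  qed simp
  have E: "(\<Sum>sh<N. \<Sum>k<K. g ((k + sh) mod N) (grp L k)) = (\<Sum>r = 1..Lam. L r * card {p \<in> {..<N} \<times> {..<F}. set (take r ps) \<subseteq> {l\<in>{..<Lam}. p \<notin> Z l}})"
    using S2 S3 S4 S5 by linarith
  show ?thesis using S1 unfolding E .
qed


lemma converse:
  assumes LK: "Lam \<le> K" and KN: "K \<le> N" and sumL: "(\<Sum>r = 1..Lam. L r) = K"
    and t1: "1 \<le> t" and tL: "t \<le> Lam"
    and ach: "achievable N K Lam (real t / real Lam * real N) L T"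
  shows "f_profile Lam L t \<le> T"
proof -
  have N0: "0 < N" and Lam0: "0 < Lam" using LK KN t1 tL by auto
  obtain F where F0: "F > 0"
    and rest: "\<exists>Z enc dec. (\<forall>l<Lam. Z l \<subseteq> {..<N} \<times> {..<F} \<and> real (card (Z l)) \<le> (real t / real Lam * real N) * real F) \<and>
        (\<forall>a d. valid_assoc K Lam L a \<and> valid_demand N K d \<longrightarrow>
           (\<exists>B::nat. real B \<le> T * real F \<and>
              (\<forall>W. length (enc a d W :: bool list) = B) \<and>
              (\<forall>k<K. \<forall>W. \<forall>j<F.
                 dec a d k (enc a d W) (mask (Z (a k)) W) j = W (d k, j))))"
    using ach unfolding achievable_def by atomize_elim assumption
  obtain Z enc dec where
    cap: "\<forall>l<Lam. Z l \<subseteq> {..<N} \<times> {..<F} \<and> real (card (Z l)) \<le> (real t / real Lam * real N) * real F"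
    and scheme: "\<forall>a d. valid_assoc K Lam L a \<and> valid_demand N K d \<longrightarrow>
           (\<exists>B::nat. real B \<le> T * real F \<and>
              (\<forall>W. length (enc a d W :: bool list) = B) \<and>
              (\<forall>k<K. \<forall>W. \<forall>j<F.
                 dec a d k (enc a d W) (mask (Z (a k)) W) j = W (d k, j)))"
    using rest by atomize_elim assumption
  define U where "U = {..<N} \<times> {..<F}"
  define Dp where "Dp p = {l\<in>{..<Lam}. p \<notin> Z l}" for p
  define P where "P = permutations_of_set {..<Lam::nat}"
  have psumL: "psum L Lam = K" using sumL by (simp add: psum_def)
  have fU: "finite U" unfolding U_def by auto
  have fP: "finite P" unfolding P_def by simp
  have cardP: "card P = fact Lam" unfolding P_def by simp
  have each: "real (\<Sum>r = 1..Lam. L r * card {p \<in> U. set (take r ps) \<subseteq> Dp p}) \<le> real N * T * real F"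
    if "ps \<in> P" for ps
    using perm_bound[OF psumL KN N0 that[unfolded P_def] scheme] unfolding U_def Dp_def by simp
  have "real (\<Sum>ps\<in>P. \<Sum>r = 1..Lam. L r * card {p \<in> U. set (take r ps) \<subseteq> Dp p}) \<le> (\<Sum>ps\<in>P. real N * T * real F)"
    unfolding of_nat_sum[of _ P] by (intro sum_mono) (use each in auto)
  also have "\<dots> = fact Lam * (real N * T * real F)" using cardP by simp
  also have "(\<Sum>ps\<in>P. \<Sum>r = 1..Lam. L r * card {p \<in> U. set (take r ps) \<subseteq> Dp p})
     = (\<Sum>r = 1..Lam. L r * (\<Sum>p\<in>U. card {ps\<in>P. set (take r ps) \<subseteq> Dp p}))"
  proof -
    have "(\<Sum>ps\<in>P. \<Sum>r = 1..Lam. L r * card {p \<in> U. set (take r ps) \<subseteq> Dp p})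
        = (\<Sum>r = 1..Lam. \<Sum>ps\<in>P. L r * card {p \<in> U. set (take r ps) \<subseteq> Dp p})" by (rule sum.swap)
    also have "\<dots> = (\<Sum>r = 1..Lam. L r * (\<Sum>ps\<in>P. card {p \<in> U. set (take r ps) \<subseteq> Dp p}))"
      by (simp add: sum_distrib_left)
    also have "\<dots> = (\<Sum>r = 1..Lam. L r * (\<Sum>p\<in>U. card {ps\<in>P. set (take r ps) \<subseteq> Dp p}))"
      using double_count[OF fP fU] by simp
    finally show ?thesis .
  qed
  also have "\<dots> = (\<Sum>r = 1..Lam. L r * (\<Sum>p\<in>U. (card (Dp p) choose r) * fact r * fact (Lam - r)))"
  proof (intro sum.cong refl arg_cong2[where f = "(*)"])
    fix r p assume r: "r \<in> {1..Lam}" and p: "p \<in> U"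
    show "card {ps\<in>P. set (take r ps) \<subseteq> Dp p} = (card (Dp p) choose r) * fact r * fact (Lam - r)"
      unfolding P_def using perm_prefix_count[of "{..<Lam}" "Dp p" r] r by (auto simp: Dp_def)
  qed
  finally have A: "real (\<Sum>r = 1..Lam. L r * (\<Sum>p\<in>U. (card (Dp p) choose r) * fact r * fact (Lam - r)))
     \<le> fact Lam * (real N * T * real F)" .
  have "real (\<Sum>r = 1..Lam. L r * (\<Sum>p\<in>U. (card (Dp p) choose r) * fact r * fact (Lam - r)))
      = fact Lam * (\<Sum>p\<in>U. phi Lam L (card (Dp p)))"
  proof -
    have "real (\<Sum>r = 1..Lam. L r * (\<Sum>p\<in>U. (card (Dp p) choose r) * fact r * fact (Lam - r)))
       = (\<Sum>r = 1..Lam. \<Sum>p\<in>U. fact Lam * (real (L r) * real (card (Dp p) choose r) / real (Lam choose r)))"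
      unfolding of_nat_sum[of _ "{1..Lam}"]
    proof (rule sum.cong[OF refl])
      fix r assume r: "r \<in> {1..Lam}"
      have fl: "real (fact r) * real (fact (Lam - r)) * real (Lam choose r) = fact Lam"
      proof -
        have fl0: "fact r * fact (Lam - r) * (Lam choose r) = (fact Lam :: nat)" using r by (intro binomial_fact_lemma) auto
        have "real (fact r * fact (Lam - r) * (Lam choose r)) = real (fact Lam :: nat)" unfolding fl0 ..
        then show ?thesis by (simp only: of_nat_mult of_nat_fact)
      qed
      have cpos: "real (Lam choose r) > 0" using r by simp
      show "real (L r * (\<Sum>p\<in>U. (card (Dp p) choose r) * fact r * fact (Lam - r)))
        = (\<Sum>p\<in>U. fact Lam * (real (L r) * real (card (Dp p) choose r) / real (Lam choose r)))"
        unfolding of_nat_mult of_nat_sum sum_distrib_left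
      proof (rule sum.cong[OF refl])
        fix p
        show "real (L r) * (real (card (Dp p) choose r) * real (fact r) * real (fact (Lam - r))) =
           fact Lam * (real (L r) * real (card (Dp p) choose r) / real (Lam choose r))"
          using cpos fl[symmetric] by (simp add: field_simps)
      qed
    qed
    also have "\<dots> = fact Lam * (\<Sum>p\<in>U. phi Lam L (card (Dp p)))"
      unfolding phi_def sum_distrib_left by (subst sum.swap) simp
    finally show ?thesis .
  qed
  with A have B: "(\<Sum>p\<in>U. phi Lam L (card (Dp p))) \<le> real N * T * real F"
    by (simp add: mult_le_cancel_left_pos)
  obtain s where s0: "s \<ge> 0" and st: "\<And>x. phi Lam L x \<ge> phi Lam L (Lam - t) + (real x - real (Lam - t)) * s"
    using phi_tangent[of Lam L "Lam - t"] by blast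
  have cardU: "card U = N * F" unfolding U_def by simp
  have Dsum: "(\<Sum>p\<in>U. real (card (Dp p))) \<ge> real (Lam - t) * real (N * F)"
  proof -
    define Cp where "Cp p = {l\<in>{..<Lam}. p \<in> Z l}" for p
    have dc: "real (card (Dp p)) = real Lam - real (card (Cp p))" for p
    proof -
      have "Dp p = {..<Lam} - Cp p" unfolding Dp_def Cp_def by auto
      moreover have "finite (Cp p)" "Cp p \<subseteq> {..<Lam}" unfolding Cp_def by auto
      then have "card ({..<Lam} - Cp p) = Lam - card (Cp p)" by (simp add: card_Diff_subset)
      ultimately have "card (Dp p) = Lam - card (Cp p)" by simp
      moreover have "card (Cp p) \<le> Lam"
      proof -
        have "Cp p \<subseteq> {..<Lam}" unfolding Cp_def by auto
        then have "card (Cp p) \<le> card {..<Lam}" by (intro card_mono) auto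
        then show ?thesis by simp
      qed
      ultimately show ?thesis by (simp add: of_nat_diff)
    qed
    have "(\<Sum>p\<in>U. card (Cp p)) = (\<Sum>l<Lam. card {p\<in>U. p \<in> Z l})"
      unfolding Cp_def using double_count[OF fU finite_lessThan[of Lam], of "\<lambda>p l. p \<in> Z l"] by simp
    also have "\<dots> = (\<Sum>l<Lam. card (Z l))"
      by (intro sum.cong refl arg_cong[where f = card]) (use cap in \<open>auto simp: U_def\<close>)
    finally have "real (\<Sum>p\<in>U. card (Cp p)) = (\<Sum>l<Lam. real (card (Z l)))" by simp
    also have "\<dots> \<le> (\<Sum>l<Lam. (real t / real Lam * real N) * real F)"
      by (intro sum_mono) (use cap in auto)
    also have "\<dots> = real t * real N * real F" using Lam0 by simp
    finally have C: "(\<Sum>p\<in>U. real (card (Cp p))) \<le> real t * real N * real F" by simp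
    have E1: "(\<Sum>p\<in>U. real (card (Dp p))) = real Lam * real (N * F) - (\<Sum>p\<in>U. real (card (Cp p)))"
      unfolding dc by (simp add: sum_subtractf cardU)
    have E2: "real (Lam - t) * real (N * F) = real Lam * real (N * F) - real t * real N * real F"
      using tL by (simp add: of_nat_diff algebra_simps)
    show ?thesis using E1 E2 C by linarith
  qed
  have G1: "(\<Sum>p\<in>U. phi Lam L (Lam - t) + (real (card (Dp p)) - real (Lam - t)) * s) \<le> (\<Sum>p\<in>U. phi Lam L (card (Dp p)))"
    by (intro sum_mono st)
  have G2: "(\<Sum>p\<in>U. phi Lam L (Lam - t) + (real (card (Dp p)) - real (Lam - t)) * s)
     = real (N * F) * phi Lam L (Lam - t) + s * ((\<Sum>p\<in>U. real (card (Dp p))) - real (Lam - t) * real (N * F))"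
    by (simp add: sum.distrib sum_subtractf sum_distrib_left sum_distrib_right cardU algebra_simps)
  have G3: "0 \<le> s * ((\<Sum>p\<in>U. real (card (Dp p))) - real (Lam - t) * real (N * F))"
    using s0 Dsum by simp
  have "real (N * F) * phi Lam L (Lam - t) \<le> real N * T * real F" using G1 G2 G3 B by linarith
  then have "phi Lam L (Lam - t) \<le> T" using N0 F0 by (simp add: mult.commute mult.left_commute)
  then show ?thesis using f_phi[OF tL] by simp
qed


lemma xor_split:
  assumes "finite X" "k \<in> X"
  shows "odd (card {x\<in>X. f x}) = (f k \<noteq> odd (card {x\<in>X - {k}. f x}))"
proof (cases "f k")
  case True
  then have "{x\<in>X. f x} = insert k {x\<in>X - {k}. f x}" using assms by auto
  moreover have "finite {x\<in>X - {k}. f x}" using assms by auto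
  ultimately have "card {x\<in>X. f x} = Suc (card {x\<in>X - {k}. f x})" by simp
  then show ?thesis using True by simp
next
  case False
  then have "{x\<in>X. f x} = {x\<in>X - {k}. f x}" using assms by auto
  then show ?thesis using False by simp
qed

lemma subsets_containing:
  assumes fA: "finite A" and l: "l \<in> A" and t: "1 \<le> t"
  shows "card {S. S \<subseteq> A \<and> card S = t \<and> l \<in> S} = (card A - 1) choose (t - 1)"
proof -
  have eq: "{S. S \<subseteq> A \<and> card S = t \<and> l \<in> S} = insert l ` {S. S \<subseteq> A - {l} \<and> card S = t - 1}"
  proof (intro equalityI subsetI)
    fix S assume S: "S \<in> {S. S \<subseteq> A \<and> card S = t \<and> l \<in> S}"
    then have "S \<subseteq> A" by simp
    then have "finite S" using fA by (rule finite_subset)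
    then have "S - {l} \<in> {S. S \<subseteq> A - {l} \<and> card S = t - 1}" using S by auto
    moreover have "S = insert l (S - {l})" using S by auto
    ultimately show "S \<in> insert l ` {S. S \<subseteq> A - {l} \<and> card S = t - 1}" by blast
  next
    fix S assume "S \<in> insert l ` {S. S \<subseteq> A - {l} \<and> card S = t - 1}"
    then obtain S' where S': "S' \<subseteq> A - {l}" "card S' = t - 1" "S = insert l S'" by blast
    then have "S' \<subseteq> A" by auto
    then have "finite S'" using fA by (rule finite_subset)
    then have "card S = t" using S' t by (simp add: subset_Diff_insert)
    then show "S \<in> {S. S \<subseteq> A \<and> card S = t \<and> l \<in> S}" using S' l by auto
  qed
  have inj: "inj_on (insert l) {S. S \<subseteq> A - {l} \<and> card S = t - 1}"
  proof (rule inj_onI)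
    fix S1 S2 assume "S1 \<in> {S. S \<subseteq> A - {l} \<and> card S = t - 1}" "S2 \<in> {S. S \<subseteq> A - {l} \<and> card S = t - 1}"
      "insert l S1 = insert l S2"
    moreover have "S1 = insert l S1 - {l}" "S2 = insert l S2 - {l}" using calculation(1,2) by auto
    ultimately show "S1 = S2" by simp
  qed
  have "card {S. S \<subseteq> A \<and> card S = t \<and> l \<in> S} = card {S. S \<subseteq> A - {l} \<and> card S = t - 1}"
    unfolding eq using inj by (rule card_image)
  also have "\<dots> = card (A - {l}) choose (t - 1)" using fA by (intro n_subsets) auto
  also have "\<dots> = (card A - 1) choose (t - 1)" using l fA by simp
  finally show ?thesis .
qed

definition rk :: "(nat \<Rightarrow> nat) \<Rightarrow> nat \<Rightarrow> nat" where
  "rk a k = card {k'. k' < k \<and> a k' = a k}"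

lemma rk_lt:
  assumes "k < K"
  shows "rk a k < card {k'. k' < K \<and> a k' = a k}"
  unfolding rk_def
proof (rule psubset_card_mono)
  show "finite {k'. k' < K \<and> a k' = a k}" by auto
  show "{k'. k' < k \<and> a k' = a k} \<subset> {k'. k' < K \<and> a k' = a k}" using assms by auto
qed

lemma rk_mono:
  assumes "k1 < k2" "a k1 = a k2"
  shows "rk a k1 < rk a k2"
  unfolding rk_def
proof (rule psubset_card_mono)
  show "finite {k'. k' < k2 \<and> a k' = a k2}" by auto
  show "{k'. k' < k1 \<and> a k' = a k1} \<subset> {k'. k' < k2 \<and> a k' = a k2}" using assms by auto
qed

lemma rk_inj:
  assumes "a k1 = a k2" "rk a k1 = rk a k2"
  shows "k1 = k2"
  using rk_mono[of k1 k2 a] rk_mono[of k2 k1 a] assms by (cases "k1 < k2"; cases "k2 < k1") auto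

lemma rk_surj:
  assumes "j < card {k'. k' < K \<and> a k' = c}"
  shows "\<exists>k'<K. a k' = c \<and> rk a k' = j"
proof -
  let ?U = "{k'. k' < K \<and> a k' = c}"
  have inj: "inj_on (rk a) ?U"
  proof (rule inj_onI)
    fix x y assume "x \<in> ?U" "y \<in> ?U" "rk a x = rk a y"
    then show "x = y" using rk_inj[of a x y] by simp
  qed
  have sub: "rk a ` ?U \<subseteq> {..<card ?U}"
  proof
    fix x assume "x \<in> rk a ` ?U"
    then obtain k where k: "k < K" "a k = c" "x = rk a k" by blast
    then show "x \<in> {..<card ?U}" using rk_lt[of k K a] by auto
  qed
  have "card (rk a ` ?U) = card {..<card ?U}" using inj by (simp add: card_image)
  then have "rk a ` ?U = {..<card ?U}" using sub by (intro card_subset_eq) auto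
  then have "j \<in> rk a ` ?U" using assms by auto
  then show ?thesis by blast
qed


lemma achievability:
  assumes LK: "Lam \<le> K" and KN: "K \<le> N" and mono: "\<forall>r. 1 \<le> r \<and> r < Lam \<longrightarrow> L (Suc r) \<le> L r"
    and sumL: "(\<Sum>r = 1..Lam. L r) = K" and t1: "1 \<le> t" and tL: "t \<le> Lam"
  shows "achievable N K Lam (real t / real Lam * real N) L (f_profile Lam L t)"
proof -
  define Sets where "Sets = {S. S \<subseteq> {..<Lam} \<and> card S = t}"
  define F where "F = card Sets"
  have F_eq: "F = Lam choose t" unfolding F_def Sets_def using n_subsets[of "{..<Lam}" t] by simp
  have F0: "F > 0" using tL F_eq by simp
  have finSets: "finite Sets"
  proof -
    have "Sets \<subseteq> Pow {..<Lam}" unfolding Sets_def by auto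
    then show ?thesis by (rule finite_subset) simp
  qed
  obtain g where g: "bij_betw g {0..<F} Sets"
    using ex_bij_betw_nat_finite[OF finSets] unfolding F_def by (elim exE) 
  have g': "bij_betw g {..<F} Sets" using g by (simp add: atLeast0LessThan)
  define idx where "idx = the_inv_into {..<F} g"
  have ginj: "inj_on g {..<F}" using g' by (simp add: bij_betw_def)
  have gimg: "g ` {..<F} = Sets" using g' by (simp add: bij_betw_def)
  have g_in: "g j \<in> Sets" if "j < F" for j using gimg that by auto
  have idx_in: "idx S < F" if "S \<in> Sets" for S
    unfolding idx_def using the_inv_into_into[OF ginj, of S "{..<F}"] that gimg by auto
  have g_idx: "g (idx S) = S" if "S \<in> Sets" for S
    unfolding idx_def using f_the_inv_into_f[OF ginj, of S] that gimg by auto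
  have idx_g: "idx (g j) = j" if "j < F" for j
    unfolding idx_def using the_inv_into_f_f[OF ginj, of j] that by auto
  define Z where "Z l = {(n, b). n < N \<and> b < F \<and> l \<in> g b}" for l
  have cap: "\<forall>l<Lam. Z l \<subseteq> {..<N} \<times> {..<F} \<and> real (card (Z l)) \<le> (real t / real Lam * real N) * real F"
  proof (intro allI impI conjI)
    fix l assume l: "l < Lam"
    show "Z l \<subseteq> {..<N} \<times> {..<F}" unfolding Z_def by auto
    have Zeq: "Z l = {..<N} \<times> {b. b < F \<and> l \<in> g b}" unfolding Z_def by auto
    have img: "g ` {b. b < F \<and> l \<in> g b} = {S. S \<subseteq> {..<Lam} \<and> card S = t \<and> l \<in> S}"
    proof (intro equalityI subsetI)
      fix S assume "S \<in> g ` {b. b < F \<and> l \<in> g b}"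
      then obtain b where b: "b < F" "l \<in> g b" "S = g b" by auto
      then show "S \<in> {S. S \<subseteq> {..<Lam} \<and> card S = t \<and> l \<in> S}" using g_in[of b] unfolding Sets_def by auto
    next
      fix S assume S: "S \<in> {S. S \<subseteq> {..<Lam} \<and> card S = t \<and> l \<in> S}"
      then have SS: "S \<in> Sets" unfolding Sets_def by auto
      have "idx S \<in> {b. b < F \<and> l \<in> g b}" using idx_in[OF SS] g_idx[OF SS] S by auto
      then show "S \<in> g ` {b. b < F \<and> l \<in> g b}" using g_idx[OF SS] by (metis image_eqI)
    qed
    have "card {b. b < F \<and> l \<in> g b} = card (g ` {b. b < F \<and> l \<in> g b})"
      by (rule card_image[symmetric]) (rule inj_on_subset[OF ginj], auto)
    also have "\<dots> = (Lam - 1) choose (t - 1)"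
      unfolding img using subsets_containing[of "{..<Lam}" l t] l t1 by simp
    finally have cb: "card {b. b < F \<and> l \<in> g b} = (Lam - 1) choose (t - 1)" .
    have cZ: "card (Z l) = N * ((Lam - 1) choose (t - 1))" unfolding Zeq cb[symmetric] by (simp add: card_cartesian_product)
    have key: "Lam * ((Lam - 1) choose (t - 1)) = t * (Lam choose t)"
      using times_binomial_minus1_eq[of t Lam] t1 by simp
    have Lpos: "real Lam > 0" using tL t1 by simp
    have "real (card (Z l)) = real N * real ((Lam - 1) choose (t - 1))" unfolding cZ by simp
    also have "\<dots> = real N * (real t * real (Lam choose t)) / real Lam"
      using key Lpos by (simp add: field_simps) (metis of_nat_mult)
    also have "\<dots> = (real t / real Lam * real N) * real F" unfolding F_eq by (simp add: field_simps)
    finally show "real (card (Z l)) \<le> (real t / real Lam * real N) * real F" by simp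
  qed
  define sig where "sig a = (SOME \<sigma>. bij_betw \<sigma> {1..Lam} {..<Lam} \<and>
      (\<forall>r\<in>{1..Lam}. card {k. k < K \<and> a k = \<sigma> r} = L r))" for a :: "nat \<Rightarrow> nat"
  define rho where "rho a l = the_inv_into {1..Lam} (sig a) l" for a l
  define P where "P a = {(k, b). k < K \<and> b < F \<and> (\<forall>\<mu>\<in>g b. rho a (a k) < rho a \<mu>)}" for a
  define V where "V a k Q = {k'. k' < K \<and> rk a k' = rk a k \<and> a k' \<in> Q}" for a k and Q :: "nat set"
  define tr where "tr a d W kb = (let Q = insert (a (fst kb)) (g (snd kb)) in
      odd (card {k'\<in>V a (fst kb) Q. W (d k', idx (Q - {a k'}))}))"
    for a d :: "nat \<Rightarrow> nat" and W :: "nat \<times> nat \<Rightarrow> bool" and kb :: "nat \<times> nat"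
  define enc :: "(nat \<Rightarrow> nat) \<Rightarrow> (nat \<Rightarrow> nat) \<Rightarrow> (nat \<times> nat \<Rightarrow> bool) \<Rightarrow> bool list"
    where "enc a d W = map (tr a d W) (sorted_list_of_set (P a))" for a d W
  define kmin where "kmin a k Q = (SOME k0. k0 \<in> V a k Q \<and> (\<forall>k'\<in>V a k Q. rho a (a k0) \<le> rho a (a k')))" for a k Q
  define pos where "pos a x = (THE i. i < length (sorted_list_of_set (P a)) \<and> sorted_list_of_set (P a) ! i = x)" for a x
  define dec :: "(nat \<Rightarrow> nat) \<Rightarrow> (nat \<Rightarrow> nat) \<Rightarrow> nat \<Rightarrow> bool list \<Rightarrow> (nat \<times> nat \<Rightarrow> bool) \<Rightarrow> nat \<Rightarrow> bool"
    where "dec a d k msg cache j = (if a k \<in> g j then cache (d k, j) else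
      (let Q = insert (a k) (g j); k0 = kmin a k Q; b0 = idx (Q - {a k0}) in
        (msg ! pos a (k0, b0)) \<noteq> odd (card {k'\<in>V a k Q - {k}. cache (d k', idx (Q - {a k'}))})))"
    for a d k msg cache j
  have main: "\<forall>a d. valid_assoc K Lam L a \<and> valid_demand N K d \<longrightarrow>
           (\<exists>B::nat. real B \<le> f_profile Lam L t * real F \<and>
              (\<forall>W. length (enc a d W) = B) \<and>
              (\<forall>k<K. \<forall>W. \<forall>j<F.
                 dec a d k (enc a d W) (mask (Z (a k)) W) j = W (d k, j)))"
  proof (intro allI impI)
    fix a d :: "nat \<Rightarrow> nat"
    assume vad: "valid_assoc K Lam L a \<and> valid_demand N K d"
    have aK: "a k < Lam" if "k < K" for k using vad that unfolding valid_assoc_def by simp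
    have dN: "d k < N" if "k < K" for k using vad that unfolding valid_demand_def by simp
    have ex: "\<exists>\<sigma>. bij_betw \<sigma> {1..Lam} {..<Lam} \<and> (\<forall>r\<in>{1..Lam}. card {k. k < K \<and> a k = \<sigma> r} = L r)"
      using vad unfolding valid_assoc_def by (elim conjE)
    have sigp: "bij_betw (sig a) {1..Lam} {..<Lam} \<and> (\<forall>r\<in>{1..Lam}. card {k. k < K \<and> a k = sig a r} = L r)"
      unfolding sig_def by (rule someI_ex[OF ex])
    have sinj: "inj_on (sig a) {1..Lam}" using sigp by (simp add: bij_betw_def)
    have simg: "sig a ` {1..Lam} = {..<Lam}" using sigp by (simp add: bij_betw_def)
    have scard: "card {k. k < K \<and> a k = sig a r} = L r" if "r \<in> {1..Lam}" for r using sigp that by simp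
    have rho_in: "rho a l \<in> {1..Lam}" if "l < Lam" for l
      unfolding rho_def using the_inv_into_into[OF sinj, of l "{1..Lam}"] that simg by auto
    have sig_rho: "sig a (rho a l) = l" if "l < Lam" for l
      unfolding rho_def using f_the_inv_into_f[OF sinj, of l] that simg by auto
    have rho_sig: "rho a (sig a r) = r" if "r \<in> {1..Lam}" for r
      unfolding rho_def using the_inv_into_f_f[OF sinj, of r] that by auto
    have sig_lt: "sig a r < Lam" if "r \<in> {1..Lam}" for r using simg that by auto
    have rho_inj: "l1 = l2" if "l1 < Lam" "l2 < Lam" "rho a l1 = rho a l2" for l1 l2
      using sig_rho[OF that(1)] sig_rho[OF that(2)] that(3) by metis
    have Lc: "card {k. k < K \<and> a k = l} = L (rho a l)" if "l < Lam" for l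
      using scard[OF rho_in[OF that]] sig_rho[OF that] by simp
    have Lmono: "L r2 \<le> L r1" if "1 \<le> r1" "r1 \<le> r2" "r2 \<le> Lam" for r1 r2
      using that(2,3)
    proof (induction rule: dec_induct)
      case base then show ?case by simp
    next
      case (step n)
      have "L (Suc n) \<le> L n" using mono step that(1) by auto
      then show ?case using step by simp
    qed
    have finP: "finite (P a)"
    proof -
      have "P a \<subseteq> {..<K} \<times> {..<F}" unfolding P_def by auto
      then show ?thesis by (rule finite_subset) simp
    qed
    have len: "\<forall>W. length (enc a d W) = card (P a)" unfolding enc_def by simp
    have cardP: "card (P a) = (\<Sum>r = 1..Lam. L r * ((Lam - r) choose t))"
    proof -
      have Peq: "P a = Sigma {..<K} (\<lambda>k. {b. b < F \<and> (\<forall>\<mu>\<in>g b. rho a (a k) < rho a \<mu>)})"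
        unfolding P_def by auto
      have c1: "card (P a) = (\<Sum>k<K. card {b. b < F \<and> (\<forall>\<mu>\<in>g b. rho a (a k) < rho a \<mu>)})"
        unfolding Peq by (rule card_SigmaI) auto
      have c2: "card {b. b < F \<and> (\<forall>\<mu>\<in>g b. rho a (a k) < rho a \<mu>)} = (Lam - rho a (a k)) choose t"
        if k: "k < K" for k
      proof -
        define r0 where "r0 = rho a (a k)"
        have r0: "r0 \<in> {1..Lam}" using rho_in[OF aK[OF k]] r0_def by simp
        define H where "H = {\<mu>. \<mu> < Lam \<and> r0 < rho a \<mu>}"
        have Heq: "H = sig a ` {Suc r0..Lam}"
        proof (intro equalityI subsetI)
          fix \<mu> assume "\<mu> \<in> H"
          then have mu: "\<mu> < Lam" "r0 < rho a \<mu>" unfolding H_def by auto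
          have "rho a \<mu> \<in> {Suc r0..Lam}" using mu rho_in[OF mu(1)] by auto
          then show "\<mu> \<in> sig a ` {Suc r0..Lam}" using sig_rho[OF mu(1)] by (intro image_eqI[where x = "rho a \<mu>"]) simp_all
        next
          fix \<mu> assume "\<mu> \<in> sig a ` {Suc r0..Lam}"
          then obtain r where r: "r \<in> {Suc r0..Lam}" "\<mu> = sig a r" by auto
          then have r1: "r \<in> {1..Lam}" using r0 by auto
          show "\<mu> \<in> H" unfolding H_def using r sig_lt[OF r1] rho_sig[OF r1] by auto
        qed
        have cH: "card H = Lam - r0"
        proof -
          have "{Suc r0..Lam} \<subseteq> {1..Lam}" using r0 by auto
          then have "inj_on (sig a) {Suc r0..Lam}" using sinj by (rule inj_on_subset[rotated])
          then show ?thesis unfolding Heq by (simp add: card_image)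
        qed
        have img: "g ` {b. b < F \<and> (\<forall>\<mu>\<in>g b. r0 < rho a \<mu>)} = {S. S \<subseteq> H \<and> card S = t}"
        proof (intro equalityI subsetI)
          fix S assume "S \<in> g ` {b. b < F \<and> (\<forall>\<mu>\<in>g b. r0 < rho a \<mu>)}"
          then obtain b where b: "b < F" "\<forall>\<mu>\<in>g b. r0 < rho a \<mu>" "S = g b" by auto
          have "g b \<in> Sets" using g_in[OF b(1)] .
          then show "S \<in> {S. S \<subseteq> H \<and> card S = t}" using b unfolding Sets_def H_def by auto
        next
          fix S assume S: "S \<in> {S. S \<subseteq> H \<and> card S = t}"
          then have SS: "S \<in> Sets" unfolding Sets_def H_def by auto
          have "idx S \<in> {b. b < F \<and> (\<forall>\<mu>\<in>g b. r0 < rho a \<mu>)}"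
            using idx_in[OF SS] g_idx[OF SS] S unfolding H_def by auto
          then show "S \<in> g ` {b. b < F \<and> (\<forall>\<mu>\<in>g b. r0 < rho a \<mu>)}" using g_idx[OF SS] by (intro image_eqI[where x = "idx S"]) simp_all
        qed
        have "card {b. b < F \<and> (\<forall>\<mu>\<in>g b. r0 < rho a \<mu>)} = card (g ` {b. b < F \<and> (\<forall>\<mu>\<in>g b. r0 < rho a \<mu>)})"
          by (rule card_image[symmetric]) (rule inj_on_subset[OF ginj], auto)
        also have "\<dots> = card H choose t" unfolding img by (rule n_subsets) (simp add: H_def)
        finally show ?thesis unfolding cH r0_def .
      qed
      have "card (P a) = (\<Sum>k<K. (Lam - rho a (a k)) choose t)" unfolding c1 by (rule sum.cong) (simp_all add: c2)
      also have "\<dots> = (\<Sum>r = 1..Lam. \<Sum>k\<in>{k. k \<in> {..<K} \<and> rho a (a k) = r}. (Lam - rho a (a k)) choose t)"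
      proof (rule sum.group[symmetric])
        show "(\<lambda>k. rho a (a k)) ` {..<K} \<subseteq> {1..Lam}"
        proof
          fix x assume "x \<in> (\<lambda>k. rho a (a k)) ` {..<K}"
          then obtain k where "k < K" "x = rho a (a k)" by auto
          then show "x \<in> {1..Lam}" using rho_in[OF aK] by simp
        qed
      qed auto
      also have "\<dots> = (\<Sum>r = 1..Lam. L r * ((Lam - r) choose t))"
      proof (rule sum.cong[OF refl])
        fix r assume r: "r \<in> {1..Lam}"
        have "{k. k \<in> {..<K} \<and> rho a (a k) = r} = {k. k < K \<and> a k = sig a r}"
        proof (intro equalityI subsetI)
          fix k assume "k \<in> {k. k \<in> {..<K} \<and> rho a (a k) = r}"
          then have "k < K" "rho a (a k) = r" by auto
          then show "k \<in> {k. k < K \<and> a k = sig a r}" using sig_rho[OF aK] by force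
        next
          fix k assume "k \<in> {k. k < K \<and> a k = sig a r}"
          then show "k \<in> {k. k \<in> {..<K} \<and> rho a (a k) = r}" using rho_sig[OF r] by auto
        qed
        then have "card {k. k \<in> {..<K} \<and> rho a (a k) = r} = L r" using scard[OF r] by simp
        then show "(\<Sum>k\<in>{k. k \<in> {..<K} \<and> rho a (a k) = r}. (Lam - rho a (a k)) choose t) = L r * ((Lam - r) choose t)"
          by simp
      qed
      finally show ?thesis .
    qed
    have Bb: "real (card (P a)) \<le> f_profile Lam L t * real F"
    proof -
      have "{1..Lam} = {1..Lam - t} \<union> {Lam - t + 1..Lam}" by auto
      then have "(\<Sum>r = 1..Lam. L r * ((Lam - r) choose t)) = (\<Sum>r = 1..Lam - t. L r * ((Lam - r) choose t))
         + (\<Sum>r = Lam - t + 1..Lam. L r * ((Lam - r) choose t))"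
        by (simp add: sum.union_disjoint[symmetric])
      moreover have "(\<Sum>r = Lam - t + 1..Lam. L r * ((Lam - r) choose t)) = 0"
        by (intro sum.neutral) auto
      ultimately have z: "(\<Sum>r = 1..Lam. L r * ((Lam - r) choose t)) = (\<Sum>r = 1..Lam - t. L r * ((Lam - r) choose t))"
        by simp
      have Fne: "real (Lam choose t) \<noteq> 0" using F0 F_eq by simp
      have fp: "f_profile Lam L t * real F = (\<Sum>r = 1..Lam - t. real (L r) * real ((Lam - r) choose t))"
        unfolding f_profile_def F_eq using Fne by simp
      show ?thesis unfolding cardP z fp by simp
    qed
    have decok: "\<forall>k<K. \<forall>W. \<forall>j<F. dec a d k (enc a d W) (mask (Z (a k)) W) j = W (d k, j)"
    proof (intro allI impI)
      fix k W j assume k: "k < K" and j: "j < F"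
      have lk: "a k < Lam" using aK[OF k] .
      show "dec a d k (enc a d W) (mask (Z (a k)) W) j = W (d k, j)"
      proof (cases "a k \<in> g j")
        case True
        have "(d k, j) \<in> Z (a k)" unfolding Z_def using dN[OF k] j True by simp
        then show ?thesis unfolding dec_def mask_def using True by simp
      next
        case False
        define Q where "Q = insert (a k) (g j)"
        have gjS: "g j \<in> Sets" using g_in[OF j] .
        have gjsub: "g j \<subseteq> {..<Lam}" and gjc: "card (g j) = t" using gjS unfolding Sets_def by auto
        have fingj: "finite (g j)" using gjsub by (rule finite_subset) simp
        have finQ: "finite Q" unfolding Q_def using fingj by simp
        have Qsub: "Q \<subseteq> {..<Lam}" unfolding Q_def using gjsub lk by auto
        have cQ: "card Q = Suc t" unfolding Q_def using False fingj gjc by simp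
        have QS: "Q - {c} \<in> Sets" if "c \<in> Q" for c
        proof -
          have "card (Q - {c}) = t" using cQ that finQ by (simp add: card_Diff_singleton)
          moreover have "Q - {c} \<subseteq> {..<Lam}" using Qsub by auto
          ultimately show ?thesis unfolding Sets_def by simp
        qed
        define Vs where "Vs = V a k Q"
        have kV: "k \<in> Vs" unfolding Vs_def V_def Q_def using k by simp
        have Vsub: "Vs \<subseteq> {..<K}" unfolding Vs_def V_def by auto
        have finV: "finite Vs" using Vsub by (rule finite_subset) simp
        obtain m0 where m0: "m0 \<in> Vs" "\<forall>k'. k' \<in> Vs \<longrightarrow> rho a (a m0) \<le> rho a (a k')"
          using ex_has_least_nat[of "\<lambda>x. x \<in> Vs" k "\<lambda>k'. rho a (a k')"] kV by auto
        have ex0: "\<exists>k0. k0 \<in> V a k Q \<and> (\<forall>k'\<in>V a k Q. rho a (a k0) \<le> rho a (a k'))"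
          using m0 unfolding Vs_def by auto
        define k0 where "k0 = kmin a k Q"
        have k0p: "k0 \<in> V a k Q \<and> (\<forall>k'\<in>V a k Q. rho a (a k0) \<le> rho a (a k'))"
          unfolding k0_def kmin_def by (rule someI_ex[OF ex0])
        have k0K: "k0 < K" "rk a k0 = rk a k" "a k0 \<in> Q" using k0p unfolding V_def by auto
        have ak0: "a k0 < Lam" using aK[OF k0K(1)] .
        define b0 where "b0 = idx (Q - {a k0})"
        have b0F: "b0 < F" using idx_in[OF QS[OF k0K(3)]] unfolding b0_def .
        have gb0: "g b0 = Q - {a k0}" using g_idx[OF QS[OF k0K(3)]] unfolding b0_def .
        have inP: "(k0, b0) \<in> P a"
        proof -
          have "rho a (a k0) < rho a \<mu>" if mu: "\<mu> \<in> Q - {a k0}" for \<mu>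
          proof (rule ccontr)
            assume nlt: "\<not> rho a (a k0) < rho a \<mu>"
            have mL: "\<mu> < Lam" using mu Qsub by auto
            have "rho a \<mu> \<noteq> rho a (a k0)" using rho_inj[OF mL ak0] mu by auto
            then have lt: "rho a \<mu> < rho a (a k0)" using nlt by simp
            have "rk a k0 < card {k'. k' < K \<and> a k' = a k0}" by (rule rk_lt[OF k0K(1)])
            also have "\<dots> = L (rho a (a k0))" using Lc[OF ak0] .
            also have "\<dots> \<le> L (rho a \<mu>)"
              using Lmono[of "rho a \<mu>" "rho a (a k0)"] rho_in[OF mL] rho_in[OF ak0] lt by auto
            also have "\<dots> = card {k'. k' < K \<and> a k' = \<mu>}" using Lc[OF mL] by simp
            finally have "rk a k0 < card {k'. k' < K \<and> a k' = \<mu>}" .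
            then have "\<exists>k'<K. a k' = \<mu> \<and> rk a k' = rk a k0" by (rule rk_surj)
            then obtain k' where k': "k' < K" "a k' = \<mu>" "rk a k' = rk a k0" by auto
            then have "k' \<in> V a k Q" unfolding V_def using k0K mu by auto
            then have "rho a (a k0) \<le> rho a (a k')" using k0p by auto
            then show False using lt k' by simp
          qed
          then show ?thesis unfolding P_def using k0K(1) b0F gb0 by auto
        qed
        have Qeq: "insert (a k0) (g b0) = Q" using gb0 k0K(3) by auto
        have Veq: "V a k0 Q = V a k Q" unfolding V_def using k0K(2) by simp
        define xs where "xs = sorted_list_of_set (P a)"
        have dxs: "distinct xs" unfolding xs_def by simp
        have sxs: "set xs = P a" unfolding xs_def using finP by simp
        have ex1: "\<exists>!i. i < length xs \<and> xs ! i = (k0, b0)" using distinct_Ex1[OF dxs] inP sxs by simp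
        have posp: "pos a (k0, b0) < length xs \<and> xs ! pos a (k0, b0) = (k0, b0)"
          unfolding pos_def xs_def[symmetric] by (rule theI'[OF ex1])
        define f where "f k' = W (d k', idx (Q - {a k'}))" for k'
        have msg: "enc a d W ! pos a (k0, b0) = odd (card {k'\<in>Vs. f k'})"
        proof -
          have "enc a d W ! pos a (k0, b0) = tr a d W (k0, b0)" unfolding enc_def xs_def[symmetric] using posp by simp
          also have "\<dots> = odd (card {k'\<in>Vs. f k'})" unfolding tr_def f_def Vs_def using Qeq Veq by (simp add: Let_def)
          finally show ?thesis .
        qed
        have cache_eq: "mask (Z (a k)) W (d k', idx (Q - {a k'})) = f k'" if k': "k' \<in> Vs - {k}" for k'
        proof -
          have k'p: "k' < K" "rk a k' = rk a k" "a k' \<in> Q" "k' \<noteq> k" using k' unfolding Vs_def V_def by auto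
          have "a k' \<noteq> a k" using rk_inj[of a k' k] k'p by auto
          then have "a k \<in> Q - {a k'}" unfolding Q_def by simp
          then have "a k \<in> g (idx (Q - {a k'}))" using g_idx[OF QS[OF k'p(3)]] by simp
          then have "(d k', idx (Q - {a k'})) \<in> Z (a k)" unfolding Z_def using dN[OF k'p(1)] idx_in[OF QS[OF k'p(3)]] by simp
          then show ?thesis unfolding mask_def f_def by simp
        qed
        have cache: "{k'\<in>Vs - {k}. mask (Z (a k)) W (d k', idx (Q - {a k'}))} = {k'\<in>Vs - {k}. f k'}"
          using cache_eq by auto
        have decv: "dec a d k (enc a d W) (mask (Z (a k)) W) j
            = (enc a d W ! pos a (kmin a k Q, idx (Q - {a (kmin a k Q)}))
               \<noteq> odd (card {k'\<in>V a k Q - {k}. mask (Z (a k)) W (d k', idx (Q - {a k'}))}))"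
          unfolding dec_def Q_def using False by (simp add: Let_def)
        also have "\<dots> = (odd (card {k'\<in>Vs. f k'}) \<noteq> odd (card {k'\<in>Vs - {k}. f k'}))"
          unfolding k0_def[symmetric] b0_def[symmetric] Vs_def[symmetric] msg cache ..
        also have "\<dots> = f k"
        proof -
          have xs: "odd (card {k'\<in>Vs. f k'}) = (f k \<noteq> odd (card {k'\<in>Vs - {k}. f k'}))"
            by (rule xor_split[OF finV kV])
          show ?thesis unfolding xs by (cases "f k"; cases "odd (card {k'\<in>Vs - {k}. f k'})") simp_all
        qed
        also have "\<dots> = W (d k, j)"
        proof -
          have "Q - {a k} = g j" unfolding Q_def using False by auto
          then show ?thesis unfolding f_def using idx_g[OF j] by simp
        qed
        finally show ?thesis .
      qed
    qed
    show "\<exists>B::nat. real B \<le> f_profile Lam L t * real F \<and>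
              (\<forall>W. length (enc a d W) = B) \<and>
              (\<forall>k<K. \<forall>W. \<forall>j<F.
                 dec a d k (enc a d W) (mask (Z (a k)) W) j = W (d k, j))"
      using Bb len decok by (intro exI[of _ "card (P a)"]) simp
  qed
  show ?thesis unfolding achievable_def
    by (rule exI[of _ F], rule conjI[OF F0], rule exI[of _ Z], rule exI[of _ enc], rule exI[of _ dec],
        rule conjI[OF cap main])
qed

theorem theorem1:
  fixes N K Lam t :: nat and L :: "nat \<Rightarrow> nat"
  assumes "Lam \<le> K" and "K \<le> N"
    and "\<forall>r. 1 \<le> r \<and> r < Lam \<longrightarrow> L (Suc r) \<le> L r"
    and "(\<Sum>r = 1..Lam. L r) = K"
    and "1 \<le> t" and "t \<le> Lam"
  shows "T_opt N K Lam (real t / real Lam * real N) L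
           = lower_conv_env Lam (f_profile Lam L) (real t)"
proof -
  have ach: "achievable N K Lam (real t / real Lam * real N) L (f_profile Lam L t)"
    by (rule achievability[OF assms])
  have "T_opt N K Lam (real t / real Lam * real N) L = f_profile Lam L t"
    unfolding T_opt_def
  proof (rule cInf_eq_minimum)
    show "f_profile Lam L t \<in> {T. achievable N K Lam (real t / real Lam * real N) L T}"
      using ach by simp
  next
    fix x assume "x \<in> {T. achievable N K Lam (real t / real Lam * real N) L T}"
    then have "achievable N K Lam (real t / real Lam * real N) L x" by simp
    then show "f_profile Lam L t \<le> x"
      using converse[OF assms(1) assms(2) assms(4) assms(5) assms(6)] by simp
  qed
  also have "\<dots> = lower_conv_env Lam (f_profile Lam L) (real t)"
    using conv_env_eq[OF assms(6)] by simp
  finally show ?thesis .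
qed

end
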